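(* Let $A$ be a Noetherian integral domain and let $B$ be an overring of $A$ that is well-centered on $A$. Then $B$ is Noetherian.
   Context: An overring of $A$ is a subring of the field of fractions of $A$ containing $A$. $B$ is well-centered on $A$ if for each $b\in B$ there is a unit $u$ of $B$ with $ub\in A$. *)

theory Defs
  imports "HOL-Algebra.Algebra"
begin

definition fraction_field_of :: "('a, 'b) ring_scheme \<Rightarrow> 'a set \<Rightarrow> bool" where
  "fraction_field_of K A \<longleftrightarrow> field K \<and> subring A K \<and>
     (\<forall>x \<in> carrier K. \<exists>a \<in> A. \<exists>s \<in> A. s \<noteq> \<zero>\<^bsub>K\<^esub> \<and> x = a \<otimes>\<^bsub>K\<^esub> inv\<^bsub>K\<^esub> s)"

definition overring :: "('a, 'b) ring_scheme \<Rightarrow> 'a set \<Rightarrow> 'a set \<Rightarrow> bool" where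
  "overring K A B \<longleftrightarrow> fraction_field_of K A \<and> subring B K \<and> A \<subseteq> B"

definition well_centered :: "('a, 'b) ring_scheme \<Rightarrow> 'a set \<Rightarrow> 'a set \<Rightarrow> bool" where
  "well_centered K A B \<longleftrightarrow>
     (\<forall>b \<in> B. \<exists>u \<in> Units (K\<lparr>carrier := B\<rparr>). u \<otimes>\<^bsub>K\<^esub> b \<in> A)"

end

theory Submission
  imports Defs
begin

lemma add_monoid_upd: "add_monoid (K\<lparr>carrier := B\<rparr>) = (add_monoid K)\<lparr>carrier := B\<rparr>"
  by simp

lemma ideal_restrict:
  assumes K: "ring K" and sA: "subring A K" and sB: "subring B K" and AB: "A \<subseteq> B"
    and I: "ideal I (K\<lparr>carrier := B\<rparr>)"
  shows "ideal (I \<inter> A) (K\<lparr>carrier := A\<rparr>)"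
proof -
  interpret K: ring K by fact
  have gB: "subgroup B (add_monoid K)" using sB subring.axioms(1) by blast
  have gA: "subgroup A (add_monoid K)" using sA subring.axioms(1) by blast
  have "subgroup I (add_monoid (K\<lparr>carrier := B\<rparr>))"
    using I ideal.axioms(1) additive_subgroup.a_subgroup by blast
  hence "subgroup I ((add_monoid K)\<lparr>carrier := B\<rparr>)" by simp
  hence gI: "subgroup I (add_monoid K)" using K.add.incl_subgroup gB by blast
  have "subgroup (I \<inter> A) (add_monoid K)" using K.add.subgroups_Inter_pair gI gA by blast
  hence "subgroup (I \<inter> A) ((add_monoid K)\<lparr>carrier := A\<rparr>)"
    using K.add.subgroup_incl gA by blast
  hence g: "subgroup (I \<inter> A) (add_monoid (K\<lparr>carrier := A\<rparr>))" by simp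
  show ?thesis
  proof (rule idealI[OF K.subring_is_ring[OF sA] g])
    fix a x assume a: "a \<in> I \<inter> A" and x: "x \<in> carrier (K\<lparr>carrier := A\<rparr>)"
    have "x \<otimes>\<^bsub>K\<lparr>carrier := B\<rparr>\<^esub> a \<in> I"
      using ideal.I_l_closed[OF I] a x AB by auto
    moreover have "x \<otimes>\<^bsub>K\<^esub> a \<in> A" using subringE(6)[OF sA] a x by auto
    ultimately show "x \<otimes>\<^bsub>K\<lparr>carrier := A\<rparr>\<^esub> a \<in> I \<inter> A" by simp
  next
    fix a x assume a: "a \<in> I \<inter> A" and x: "x \<in> carrier (K\<lparr>carrier := A\<rparr>)"
    have "a \<otimes>\<^bsub>K\<lparr>carrier := B\<rparr>\<^esub> x \<in> I"
      using ideal.I_r_closed[OF I] a x AB by auto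
    moreover have "a \<otimes>\<^bsub>K\<^esub> x \<in> A" using subringE(6)[OF sA] a x by auto
    ultimately show "a \<otimes>\<^bsub>K\<lparr>carrier := A\<rparr>\<^esub> x \<in> I \<inter> A" by simp
  qed
qed

theorem proposition3p1:
  fixes K :: "('a, 'b) ring_scheme" and A B :: "'a set"
  assumes "noetherian_domain (K\<lparr>carrier := A\<rparr>)"
    and "overring K A B"
    and "well_centered K A B"
  shows "noetherian_ring (K\<lparr>carrier := B\<rparr>)"
proof -
  have fK: "field K" and sA: "subring A K" and sB: "subring B K" and AB: "A \<subseteq> B"
    using assms(2) unfolding overring_def fraction_field_of_def by auto
  interpret K: field K by fact
  interpret S: noetherian_domain "K\<lparr>carrier := A\<rparr>" by fact
  interpret R: ring "K\<lparr>carrier := B\<rparr>" using K.subring_is_ring[OF sB] .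
  show ?thesis
  proof (rule R.noetherian_ringI)
    fix J assume J: "ideal J (K\<lparr>carrier := B\<rparr>)"
    have JA: "ideal (J \<inter> A) (K\<lparr>carrier := A\<rparr>)"
      using ideal_restrict[OF K.ring_axioms sA sB AB J] .
    then obtain F where F: "F \<subseteq> A" "finite F" "J \<inter> A = Idl\<^bsub>K\<lparr>carrier := A\<rparr>\<^esub> F"
      using S.finetely_gen[OF JA] by auto
    have FJ: "F \<subseteq> J" using S.genideal_self[of F] F by auto
    have FB: "F \<subseteq> B" using F AB by auto
    have IR: "ideal (Idl\<^bsub>K\<lparr>carrier := B\<rparr>\<^esub> F) (K\<lparr>carrier := B\<rparr>)"
      using R.genideal_ideal FB by simp
    have sub1: "Idl\<^bsub>K\<lparr>carrier := B\<rparr>\<^esub> F \<subseteq> J"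
      using R.genideal_minimal[OF J FJ] .
    have sub2: "J \<inter> A \<subseteq> Idl\<^bsub>K\<lparr>carrier := B\<rparr>\<^esub> F"
    proof -
      have "ideal (Idl\<^bsub>K\<lparr>carrier := B\<rparr>\<^esub> F \<inter> A) (K\<lparr>carrier := A\<rparr>)"
        using ideal_restrict[OF K.ring_axioms sA sB AB IR] .
      moreover have "F \<subseteq> Idl\<^bsub>K\<lparr>carrier := B\<rparr>\<^esub> F \<inter> A"
        using R.genideal_self[of F] FB F by auto
      ultimately show ?thesis using S.genideal_minimal F(3) by blast
    qed
    have "J \<subseteq> Idl\<^bsub>K\<lparr>carrier := B\<rparr>\<^esub> F"
    proof
      fix b assume b: "b \<in> J"
      have bB: "b \<in> B" using b ideal.axioms(1)[OF J] additive_subgroup.a_subset by fastforce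
      then obtain u where u: "u \<in> Units (K\<lparr>carrier := B\<rparr>)" "u \<otimes>\<^bsub>K\<^esub> b \<in> A"
        using assms(3) unfolding well_centered_def by blast
      have uB: "u \<in> B" using u(1) R.Units_closed by simp
      have "u \<otimes>\<^bsub>K\<lparr>carrier := B\<rparr>\<^esub> b \<in> J" using ideal.I_l_closed[OF J b] uB by simp
      hence "u \<otimes>\<^bsub>K\<^esub> b \<in> J \<inter> A" using u by simp
      hence ub: "u \<otimes>\<^bsub>K\<lparr>carrier := B\<rparr>\<^esub> b \<in> Idl\<^bsub>K\<lparr>carrier := B\<rparr>\<^esub> F" using sub2 by auto
      have iv: "inv\<^bsub>K\<lparr>carrier := B\<rparr>\<^esub> u \<in> B" using R.Units_inv_closed[OF u(1)] by simp
      have "inv\<^bsub>K\<lparr>carrier := B\<rparr>\<^esub> u \<otimes>\<^bsub>K\<lparr>carrier := B\<rparr>\<^esub> (u \<otimes>\<^bsub>K\<lparr>carrier := B\<rparr>\<^esub> b) = b"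
        using R.Units_l_inv[OF u(1)] R.m_assoc[of "inv\<^bsub>K\<lparr>carrier := B\<rparr>\<^esub> u" u b] iv uB bB
        by (metis R.Units_inv_closed R.l_one partial_object.select_convs(1) partial_object.surjective
              partial_object.update_convs(1) u(1))
      moreover have "inv\<^bsub>K\<lparr>carrier := B\<rparr>\<^esub> u \<otimes>\<^bsub>K\<lparr>carrier := B\<rparr>\<^esub> (u \<otimes>\<^bsub>K\<lparr>carrier := B\<rparr>\<^esub> b) \<in> Idl\<^bsub>K\<lparr>carrier := B\<rparr>\<^esub> F"
        using ideal.I_l_closed[OF IR ub] iv by simp
      ultimately show "b \<in> Idl\<^bsub>K\<lparr>carrier := B\<rparr>\<^esub> F" by simp
    qed
    with sub1 have "J = Idl\<^bsub>K\<lparr>carrier := B\<rparr>\<^esub> F" by blast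
    thus "\<exists>A'\<subseteq>carrier (K\<lparr>carrier := B\<rparr>). finite A' \<and> J = Idl\<^bsub>K\<lparr>carrier := B\<rparr>\<^esub> A'"
      using FB F(2) by auto
  qed
qed

end
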